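(* Let $A_R$ be a calibrated $R$-superalgebra with basis $B^A$ and let $e\in\mathfrak a_R$ be an idempotent such that $be=b$ or $be=0$ for every $b\in B^A$. Then $\tilde\Gamma^d(\mathrm{Col}_n(A_Re))\simeq T^A(n,d)_R\,\eta^{e^d}_{1^d,1^d}$ (even isomorphism of left $T^A(n,d)_R$-supermodules), where $\eta^{e^d}_{1^d,1^d}=(\xi^e_{1,1})^{\otimes d}$.
   Context: Let $R$ be a principal ideal domain of characteristic $0$. A calibrated $R$-supermodule is a free finite-rank $R$-supermodule $V$ with a decomposition $V_{\bar0}=V_{\mathfrak a}\oplus V_{\mathfrak c}$ into free submodules; with bases $B_{\mathfrak a},B_{\mathfrak c},B_{\bar1}$ and a total order on their union $B$, $\mathfrak S_d$ acts on $V^{\otimes d}$ by $(v_1\otimes\cdots\otimes v_d)^\sigma=(-1)^{\langle\sigma;\mathbf v\rangle}v_{\sigma1}\otimes\cdots\otimes v_{\sigma d}$ ($\langle\sigma;\mathbf v\rangle$ = number of $k<l$ with $\sigma^{-1}k>\sigma^{-1}l$, $v_k,v_l$ odd); for a $d$-tuple $\mathbf b$ of basis elements in which only even ones repeat, $y_{\mathbf b}=\prod_{b\in B_{\mathfrak c}}\#\{k:b_k=b\}!\cdot\sum_{\mathbf b'}(-1)^{\langle\mathbf b\rangle+\langle\mathbf b'\rangle}b'_1\otimes\cdots\otimes b'_d$ (sum over distinct place-permutations $\mathbf b'$; $\langle\mathbf b\rangle$ = number of $k<l$ with $b_k,b_l$ odd, $b_k>b_l$), and $\tilde\Gamma^dV=\mathrm{span}_R\{y_{\mathbf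 b}\}$. A calibrated $R$-superalgebra is a free finite-rank $R$-superalgebra $A_R$ with $A_{R,\bar0}=\mathfrak a_R\oplus\mathfrak c_R$ (free), $\mathfrak a_R$ a unital subalgebra, with bases $B^A_{\mathfrak a},B^A_{\mathfrak c},B^A_{\bar1}$, $B^A$ their union. $M_n(A_R)$ is the matrix superalgebra with basis $\xi^b_{r,s}$ ($b\in B^A$ in position $(r,s)$), calibrated by $M_n(\mathfrak a_R)$, $M_n(\mathfrak c_R)$; $T^A(n,d)_R=\tilde\Gamma^dM_n(A_R)$, a unital subsuperalgebra of $M_n(A_R)^{\otimes d}$ (Koszul sign product). For a calibrated $A_R$-supermodule $V$ (i.e. $\mathfrak a_RV_{\mathfrak a}\subseteq V_{\mathfrak a}$), $\mathrm{Col}_n(V)=V^{\oplus n}$ (column vectors) is a left $M_n(A_R)$-supermodule, calibrated by $\mathrm{Col}_n(V_{\mathfrak a})$, $\mathrm{Col}_n(V_{\mathfrak c})$, and $\tilde\Gamma^d\mathrm{Col}_n(V)$ is a left $T^A(n,d)_R$-supermodule via the natural (Koszul-signed) action of $M_n(A_R)^{\otimes d}$ on $\mathrm{Col}_n(V)^{\otimes d}$. Here $A_Re$ is calibrated with $(A_Re)_{\mathfrak a}=\mathfrak a_Re$, $(A_Re)_{\mathfrak c}=\mathfrak c_Re$. *)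

theory Defs
  imports Main "HOL-Library.Multiset" "HOL-Library.Product_Lexorder"
begin

definition is_ideal :: "'r::comm_ring_1 set \<Rightarrow> bool" where
  "is_ideal I \<longleftrightarrow> 0 \<in> I \<and> (\<forall>x\<in>I. \<forall>y\<in>I. x + y \<in> I) \<and> (\<forall>x\<in>I. \<forall>r. r * x \<in> I)"

definition principal_ideal_ring :: "'r::comm_ring_1 itself \<Rightarrow> bool" where
  "principal_ideal_ring _ \<longleftrightarrow> (\<forall>I::'r set. is_ideal I \<longrightarrow> (\<exists>a. I = {r * a | r. True}))"

section \<open>Calibrated superalgebras in coordinates (basis B^A = Ba \<union> Bc \<union> B1, structure constants m)\<close>

definition bvec :: "'b \<Rightarrow> 'b \<Rightarrow> 'r::zero_neq_one" where
  "bvec b = (\<lambda>c. if c = b then 1 else 0)"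

definition amul :: "'b set \<Rightarrow> ('b \<Rightarrow> 'b \<Rightarrow> 'b \<Rightarrow> 'r::comm_ring_1) \<Rightarrow> ('b \<Rightarrow> 'r) \<Rightarrow> ('b \<Rightarrow> 'r) \<Rightarrow> ('b \<Rightarrow> 'r)" where
  "amul BA m x y = (\<lambda>c. \<Sum>a\<in>BA. \<Sum>b\<in>BA. x a * y b * m a b c)"

definition calibrated_superalgebra ::
  "'b set \<Rightarrow> 'b set \<Rightarrow> 'b set \<Rightarrow> ('b \<Rightarrow> 'b \<Rightarrow> 'b \<Rightarrow> 'r::comm_ring_1) \<Rightarrow> ('b \<Rightarrow> 'r) \<Rightarrow> bool" where
  "calibrated_superalgebra Ba Bc B1 m one \<longleftrightarrow>
     finite (Ba \<union> Bc \<union> B1) \<and> Ba \<inter> Bc = {} \<and> Ba \<inter> B1 = {} \<and> Bc \<inter> B1 = {} \<and>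
     (\<forall>a\<in>Ba \<union> Bc \<union> B1. \<forall>b\<in>Ba \<union> Bc \<union> B1. \<forall>c. m a b c \<noteq> 0 \<longrightarrow>
         c \<in> Ba \<union> Bc \<union> B1 \<and> (c \<in> B1 \<longleftrightarrow> (a \<in> B1 \<longleftrightarrow> b \<notin> B1))) \<and>
     (\<forall>a\<in>Ba \<union> Bc \<union> B1. \<forall>b\<in>Ba \<union> Bc \<union> B1. \<forall>c\<in>Ba \<union> Bc \<union> B1.
         amul (Ba \<union> Bc \<union> B1) m (amul (Ba \<union> Bc \<union> B1) m (bvec a) (bvec b)) (bvec c)
       = amul (Ba \<union> Bc \<union> B1) m (bvec a) (amul (Ba \<union> Bc \<union> B1) m (bvec b) (bvec c))) \<and>
     (\<forall>b\<in>Ba \<union> Bc \<union> B1. amul (Ba \<union> Bc \<union> B1) m one (bvec b) = bvec b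
                        \<and> amul (Ba \<union> Bc \<union> B1) m (bvec b) one = bvec b) \<and>
     (\<forall>c. c \<notin> Ba \<longrightarrow> one c = 0) \<and>
     (\<forall>a\<in>Ba. \<forall>b\<in>Ba. \<forall>c. m a b c \<noteq> 0 \<longrightarrow> c \<in> Ba)"

section \<open>Tensor powers in coordinates: an element of V^{\<otimes>d} is a function on d-tuples (lists) of basis elements\<close>

definition lists_of :: "'x set \<Rightarrow> nat \<Rightarrow> 'x list set" where
  "lists_of X d = {xs. set xs \<subseteq> X \<and> length xs = d}"

definition inv_count :: "('x::linorder \<Rightarrow> bool) \<Rightarrow> 'x list \<Rightarrow> nat" where
  "inv_count pr bs = card {(k, l). k < l \<and> l < length bs \<and> pr (bs ! k) \<and> pr (bs ! l) \<and> bs ! k > bs ! l}"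

definition admissible :: "('x \<Rightarrow> bool) \<Rightarrow> 'x set \<Rightarrow> nat \<Rightarrow> 'x list \<Rightarrow> bool" where
  "admissible pr X d bs \<longleftrightarrow> bs \<in> lists_of X d \<and>
     (\<forall>k<d. \<forall>l<d. k \<noteq> l \<and> pr (bs ! k) \<longrightarrow> bs ! k \<noteq> bs ! l)"

text \<open>pr = "is odd", isc = "lies in B_c".\<close>
definition yvec :: "('x::linorder \<Rightarrow> bool) \<Rightarrow> ('x \<Rightarrow> bool) \<Rightarrow> 'x list \<Rightarrow> 'x list \<Rightarrow> 'r::comm_ring_1" where
  "yvec pr isc bs = (\<lambda>bs'. if mset bs' = mset bs
      then of_nat (\<Prod>b\<in>{b\<in>set bs. isc b}. fact (count (mset bs) b))
           * (-1) ^ (inv_count pr bs + inv_count pr bs')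
      else 0)"

definition Gamma_tilde :: "('x::linorder \<Rightarrow> bool) \<Rightarrow> ('x \<Rightarrow> bool) \<Rightarrow> 'x set \<Rightarrow> nat \<Rightarrow> ('x list \<Rightarrow> 'r::comm_ring_1) set" where
  "Gamma_tilde pr isc X d =
     {(\<lambda>w. \<Sum>bs\<in>{bs. admissible pr X d bs}. c bs * yvec pr isc bs w) | c. True}"

definition ksign :: "('x \<Rightarrow> bool) \<Rightarrow> ('y \<Rightarrow> bool) \<Rightarrow> 'x list \<Rightarrow> 'y list \<Rightarrow> 'r::comm_ring_1" where
  "ksign p q xs ys = (-1) ^ card {(l, k). l < k \<and> k < length xs \<and> p (xs ! k) \<and> q (ys ! l)}"

definition homog :: "('x \<Rightarrow> bool) \<Rightarrow> bool \<Rightarrow> ('x list \<Rightarrow> 'r::zero) \<Rightarrow> bool" where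
  "homog pr p x \<longleftrightarrow> (\<forall>w. x w \<noteq> 0 \<longrightarrow> odd (length (filter pr w)) = p)"

section \<open>Matrix superalgebra M_n(A): basis xi^b_{r,s} = (b,r,s); column module Col_n(V): basis (b,r)\<close>

definition Mbasis :: "'b set \<Rightarrow> nat \<Rightarrow> ('b \<times> nat \<times> nat) set" where
  "Mbasis BA n = {(b, r, s). b \<in> BA \<and> r \<in> {1..n} \<and> s \<in> {1..n}}"

definition oddM :: "'b set \<Rightarrow> 'b \<times> nat \<times> nat \<Rightarrow> bool" where
  "oddM B1 = (\<lambda>(a, _, _). a \<in> B1)"

definition oddC :: "'b set \<Rightarrow> 'b \<times> nat \<Rightarrow> bool" where
  "oddC B1 = (\<lambda>(a, _). a \<in> B1)"

definition TA :: "'b::linorder set \<Rightarrow> 'b set \<Rightarrow> 'b set \<Rightarrow> nat \<Rightarrow> nat \<Rightarrow> (('b \<times> nat \<times> nat) list \<Rightarrow> 'r::comm_ring_1) set" where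
  "TA Ba Bc B1 n d = Gamma_tilde (oddM B1) (\<lambda>(a, _, _). a \<in> Bc) (Mbasis (Ba \<union> Bc \<union> B1) n) d"

text \<open>Koszul-signed product in M_n(A)^{\<otimes>d}\<close>
definition Mtensor_mul ::
  "'b set \<Rightarrow> 'b set \<Rightarrow> ('b \<Rightarrow> 'b \<Rightarrow> 'b \<Rightarrow> 'r::comm_ring_1) \<Rightarrow> nat \<Rightarrow> nat
   \<Rightarrow> (('b \<times> nat \<times> nat) list \<Rightarrow> 'r) \<Rightarrow> (('b \<times> nat \<times> nat) list \<Rightarrow> 'r) \<Rightarrow> (('b \<times> nat \<times> nat) list \<Rightarrow> 'r)" where
  "Mtensor_mul BA B1 m n d X Y = (\<lambda>ws. if length ws = d then
     (\<Sum>xs\<in>lists_of (Mbasis BA n) d. \<Sum>ys\<in>lists_of (Mbasis BA n) d.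
        X xs * Y ys * ksign (oddM B1) (oddM B1) xs ys *
        (\<Prod>k<d. case (xs ! k, ys ! k, ws ! k) of ((a, r, s), (a', r', s'), (c, r'', s'')) \<Rightarrow>
            if s = r' \<and> r'' = r \<and> s'' = s' then m a a' c else 0))
     else 0)"

text \<open>Koszul-signed action of M_n(A)^{\<otimes>d} on Col_n(A)^{\<otimes>d}\<close>
definition col_act ::
  "'b set \<Rightarrow> 'b set \<Rightarrow> ('b \<Rightarrow> 'b \<Rightarrow> 'b \<Rightarrow> 'r::comm_ring_1) \<Rightarrow> nat \<Rightarrow> nat
   \<Rightarrow> (('b \<times> nat \<times> nat) list \<Rightarrow> 'r) \<Rightarrow> (('b \<times> nat) list \<Rightarrow> 'r) \<Rightarrow> (('b \<times> nat) list \<Rightarrow> 'r)" where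
  "col_act BA B1 m n d X Y = (\<lambda>ws. if length ws = d then
     (\<Sum>xs\<in>lists_of (Mbasis BA n) d. \<Sum>vs\<in>lists_of (BA \<times> {1..n}) d.
        X xs * Y vs * ksign (oddM B1) (oddC B1) xs vs *
        (\<Prod>k<d. case (xs ! k, vs ! k, ws ! k) of ((a, r, s), (b, t), (c, r')) \<Rightarrow>
            if s = t \<and> r' = r then m a b c else 0))
     else 0)"

text \<open>Basis of Col_n(A_R e) under the hypothesis b e \<in> {b, 0}: pairs (b,r) with b e = b.
  Calibration: (b,r) is in the a-part iff b \<in> Ba, in the c-part iff b \<in> Bc, odd iff b \<in> B1.\<close>
definition ColE_basis :: "'b set \<Rightarrow> ('b \<Rightarrow> 'b \<Rightarrow> 'b \<Rightarrow> 'r::comm_ring_1) \<Rightarrow> ('b \<Rightarrow> 'r) \<Rightarrow> nat \<Rightarrow> ('b \<times> nat) set" where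
  "ColE_basis BA m e n = {(b, r). b \<in> BA \<and> amul BA m (bvec b) e = bvec b \<and> r \<in> {1..n}}"

definition GammaColE :: "'b::linorder set \<Rightarrow> 'b set \<Rightarrow> 'b set \<Rightarrow> ('b \<Rightarrow> 'b \<Rightarrow> 'b \<Rightarrow> 'r::comm_ring_1) \<Rightarrow> ('b \<Rightarrow> 'r) \<Rightarrow> nat \<Rightarrow> nat
   \<Rightarrow> (('b \<times> nat) list \<Rightarrow> 'r) set" where
  "GammaColE Ba Bc B1 m e n d =
     Gamma_tilde (oddC B1) (\<lambda>(a, _). a \<in> Bc) (ColE_basis (Ba \<union> Bc \<union> B1) m e n) d"

definition eta_e :: "('b \<Rightarrow> 'r::comm_ring_1) \<Rightarrow> nat \<Rightarrow> ('b \<times> nat \<times> nat) list \<Rightarrow> 'r" where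
  "eta_e e d = (\<lambda>ms. if length ms = d then
      (\<Prod>k<d. case ms ! k of (b, r, s) \<Rightarrow> if r = 1 \<and> s = 1 then e b else 0) else 0)"

definition even_iso_Tmod ::
  "('b \<times> nat \<times> nat \<Rightarrow> bool) \<Rightarrow> ('b \<times> nat \<Rightarrow> bool)
   \<Rightarrow> (('b \<times> nat \<times> nat) list \<Rightarrow> 'r::comm_ring_1) set
   \<Rightarrow> ((('b \<times> nat \<times> nat) list \<Rightarrow> 'r) \<Rightarrow> (('b \<times> nat) list \<Rightarrow> 'r) \<Rightarrow> (('b \<times> nat) list \<Rightarrow> 'r))
   \<Rightarrow> ((('b \<times> nat \<times> nat) list \<Rightarrow> 'r) \<Rightarrow> (('b \<times> nat \<times> nat) list \<Rightarrow> 'r) \<Rightarrow> (('b \<times> nat \<times> nat) list \<Rightarrow> 'r))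
   \<Rightarrow> (('b \<times> nat) list \<Rightarrow> 'r) set \<Rightarrow> (('b \<times> nat \<times> nat) list \<Rightarrow> 'r) set
   \<Rightarrow> ((('b \<times> nat) list \<Rightarrow> 'r) \<Rightarrow> (('b \<times> nat \<times> nat) list \<Rightarrow> 'r)) \<Rightarrow> bool" where
  "even_iso_Tmod prM prC T act1 act2 V W f \<longleftrightarrow>
     bij_betw f V W \<and>
     (\<forall>x\<in>V. \<forall>y\<in>V. f (\<lambda>w. x w + y w) = (\<lambda>w. f x w + f y w)) \<and>
     (\<forall>c. \<forall>x\<in>V. f (\<lambda>w. c * x w) = (\<lambda>w. c * f x w)) \<and>
     (\<forall>t\<in>T. \<forall>x\<in>V. f (act1 t x) = act2 t (f x)) \<and>
     (\<forall>p. \<forall>x\<in>V. homog prC p x \<longrightarrow> homog prM p (f x))"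

end

theory Submission
  imports Defs
begin

definition iota :: "'b \<times> nat \<Rightarrow> 'b \<times> nat \<times> nat" where "iota v = (fst v, snd v, 1)"
definition proj :: "'b \<times> nat \<times> nat \<Rightarrow> 'b \<times> nat" where "proj w = (fst w, fst (snd w))"
definition fmap :: "(('b \<times> nat) list \<Rightarrow> 'r::zero) \<Rightarrow> ('b \<times> nat \<times> nat) list \<Rightarrow> 'r" where
  "fmap x = (\<lambda>ws. if (\<forall>w\<in>set ws. snd (snd w) = 1) then x (map proj ws) else 0)"

lemma proj_iota[simp]: "proj (iota v) = v" by (simp add: proj_def iota_def)
lemma proj_comp_iota[simp]: "proj \<circ> iota = id" by (simp add: fun_eq_iff)
lemma map_proj_iota[simp]: "map proj (map iota vs) = vs" by (induct vs) auto
lemma iota_proj: "snd (snd w) = 1 \<Longrightarrow> iota (proj w) = w" by (cases w) (auto simp: proj_def iota_def)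
lemma map_iota_proj: "\<forall>w\<in>set ws. snd (snd w) = 1 \<Longrightarrow> map iota (map proj ws) = ws"
  by (induct ws) (auto simp: iota_proj)
lemma inj_map_iota: "inj_on (map iota) A" by (rule inj_on_inverseI[where g="map proj"]) simp
lemma inj_iota: "inj_on iota A" by (rule inj_on_inverseI[where g="proj"]) simp
lemma snd_iota[simp]: "snd (snd (iota v)) = 1" by (simp add: iota_def)
lemma oddM_iota[simp]: "oddM B1 (iota v) = oddC B1 v" by (cases v) (simp add: oddM_def oddC_def iota_def)
lemma iota_less[simp]: "iota v < iota w \<longleftrightarrow> v < w" by (cases v; cases w) (auto simp: iota_def)
lemma iota_eq[simp]: "iota v = iota w \<longleftrightarrow> v = w" by (metis proj_iota)
lemma iscM_iota[simp]: "(case iota v of (a, _, _) \<Rightarrow> a \<in> Bc) = (case v of (a, _) \<Rightarrow> a \<in> Bc)"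
  by (cases v) (simp add: iota_def)

lemma finite_lists_of: "finite X \<Longrightarrow> finite (lists_of X d)"
  unfolding lists_of_def by (rule finite_lists_length_eq)

lemma gamma_supp:
  assumes "(\<Sum>bs\<in>{bs. admissible pr X d bs}. c bs * yvec pr isc bs w) \<noteq> (0::'r::comm_ring_1)"
  shows "set w \<subseteq> X \<and> length w = d"
proof -
  from sum.not_neutral_contains_not_neutral[OF assms] obtain bs where
    a: "admissible pr X d bs" and nz: "c bs * yvec pr isc bs w \<noteq> 0" by auto
  from nz have "mset w = mset bs" by (auto simp: yvec_def split: if_splits)
  then have "set w = set bs" "length w = length bs" by (metis set_mset_mset, metis size_mset)
  with a show ?thesis by (auto simp: admissible_def lists_of_def)
qed

lemma count_map_iota[simp]: "count (image_mset iota (mset bs)) (iota b) = count (mset bs) b"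
  by (induct bs) auto

lemma yvec_iota:
  "yvec (oddM B1) (\<lambda>(a,_,_). a \<in> Bc) (map iota bs) (map iota ws)
   = (yvec (oddC B1) (\<lambda>(a,_). a \<in> Bc) bs ws :: 'r::comm_ring_1)"
proof -
  have m: "mset (map iota ws) = mset (map iota bs) \<longleftrightarrow> mset ws = mset bs"
  proof
    assume h: "mset (map iota ws) = mset (map iota bs)"
    show "mset ws = mset bs" by (metis map_proj_iota mset_map h)
  qed simp
  have ic: "inv_count (oddM B1) (map iota xs) = inv_count (oddC B1) xs" for xs
    unfolding inv_count_def by (rule arg_cong[where f=card]) auto
  have s: "{b\<in>set (map iota bs). (\<lambda>(a,_,_). a \<in> Bc) b} = iota ` {b\<in>set bs. (\<lambda>(a,_). a \<in> Bc) b}"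
    by (auto simp: iota_def)
  have p: "(\<Prod>b\<in>{b\<in>set (map iota bs). (\<lambda>(a,_,_). a \<in> Bc) b}. fact (count (mset (map iota bs)) b))
     = (\<Prod>b\<in>{b\<in>set bs. (\<lambda>(a,_). a \<in> Bc) b}. (fact (count (mset bs) b) :: nat))"
    unfolding s by (subst prod.reindex[OF inj_iota]) (simp add: count_map_iota)
  show ?thesis unfolding yvec_def using m ic p by (auto simp: fun_eq_iff)
qed


lemma lists_of_Suc: "lists_of S (Suc d) = (\<lambda>(y, ys). y # ys) ` (S \<times> lists_of S d)"
proof (rule set_eqI, rule iffI)
  fix xs assume "xs \<in> lists_of S (Suc d)"
  then obtain y ys where "xs = y # ys" "y \<in> S" "ys \<in> lists_of S d"
    by (cases xs) (auto simp: lists_of_def)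
  thus "xs \<in> (\<lambda>(y, ys). y # ys) ` (S \<times> lists_of S d)" by force
qed (auto simp: lists_of_def)

lemma sum_lists_prod:
  assumes "finite S"
  shows "(\<Sum>ys\<in>lists_of S d. \<Prod>k<d. h k (ys ! k)) = (\<Prod>k<d. \<Sum>y\<in>S. (h k y :: 'r::comm_semiring_1))"
proof (induct d arbitrary: h)
  case 0
  have "lists_of S 0 = {[]}" by (auto simp: lists_of_def)
  thus ?case by simp
next
  case (Suc d)
  have inj: "inj_on (\<lambda>(y, ys). y # ys) (S \<times> lists_of S d)" by (auto simp: inj_on_def)
  have "(\<Sum>ys\<in>lists_of S (Suc d). \<Prod>k<Suc d. h k (ys ! k))
     = (\<Sum>(y,ys)\<in>S \<times> lists_of S d. h 0 y * (\<Prod>k<d. h (Suc k) (ys ! k)))"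
    unfolding lists_of_Suc by (subst sum.reindex[OF inj]) (simp del: prod.lessThan_Suc add: prod.lessThan_Suc_shift case_prod_beta)
  also have "\<dots> = (\<Sum>y\<in>S. h 0 y) * (\<Sum>ys\<in>lists_of S d. \<Prod>k<d. h (Suc k) (ys ! k))"
    by (simp add: sum_product sum.cartesian_product)
  also have "\<dots> = (\<Sum>y\<in>S. h 0 y) * (\<Prod>k<d. \<Sum>y\<in>S. h (Suc k) y)" using Suc[of "\<lambda>k. h (Suc k)"] by simp
  also have "\<dots> = (\<Prod>k<Suc d. \<Sum>y\<in>S. h k y)" by (simp del: prod.lessThan_Suc add: prod.lessThan_Suc_shift)
  finally show ?case .
qed

lemma Mbasis_finite: "finite BA \<Longrightarrow> finite (Mbasis BA n)"
  by (rule finite_subset[of _ "BA \<times> {1..n} \<times> {1..n}"]) (auto simp: Mbasis_def)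

lemma ksign_iota: "length vs = length xs \<Longrightarrow>
  ksign (oddM B1) (oddM B1) xs (map iota vs) = ksign (oddM B1) (oddC B1) xs vs"
  unfolding ksign_def by (rule arg_cong[where f="\<lambda>S. (-1) ^ card S"]) auto

lemma fmap_act:
  assumes fin: "finite BA" and n: "1 \<le> n"
  shows "fmap (col_act BA B1 m n d t x) = Mtensor_mul BA B1 m n d t (fmap x)"
proof (rule ext)
  fix ws
  show "fmap (col_act BA B1 m n d t x) ws = Mtensor_mul BA B1 m n d t (fmap x) ws"
  proof (cases "length ws = d")
    case False thus ?thesis by (simp add: fmap_def col_act_def Mtensor_mul_def)
  next
    case len: True
    show ?thesis
    proof (cases "\<forall>w\<in>set ws. snd (snd w) = 1")
      case all1: True
      have "fmap (col_act BA B1 m n d t x) ws = (\<Sum>xs\<in>lists_of (Mbasis BA n) d. \<Sum>vs\<in>lists_of (BA \<times> {1..n}) d.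
        t xs * x vs * ksign (oddM B1) (oddC B1) xs vs *
        (\<Prod>k<d. case (xs ! k, vs ! k, map proj ws ! k) of ((a, r, s), (b, t), (c, r')) \<Rightarrow>
            if s = t \<and> r' = r then m a b c else 0))"
        using all1 len by (simp add: fmap_def col_act_def)
      also have "\<dots> = (\<Sum>xs\<in>lists_of (Mbasis BA n) d. \<Sum>ys\<in>lists_of (Mbasis BA n) d.
        t xs * fmap x ys * ksign (oddM B1) (oddM B1) xs ys *
        (\<Prod>k<d. case (xs ! k, ys ! k, ws ! k) of ((a, r, s), (a', r', s'), (c, r'', s'')) \<Rightarrow>
            if s = r' \<and> r'' = r \<and> s'' = s' then m a a' c else 0))"
      proof (rule sum.cong[OF refl])
        fix xs assume xs: "xs \<in> lists_of (Mbasis BA n) d"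
        define G where "G ys = t xs * fmap x ys * ksign (oddM B1) (oddM B1) xs ys *
        (\<Prod>k<d. case (xs ! k, ys ! k, ws ! k) of ((a, r, s), (a', r', s'), (c, r'', s'')) \<Rightarrow>
            if s = r' \<and> r'' = r \<and> s'' = s' then m a a' c else 0)" for ys
        have sub: "map iota ` lists_of (BA \<times> {1..n}) d \<subseteq> lists_of (Mbasis BA n) d"
          using n by (auto simp: lists_of_def Mbasis_def iota_def subset_iff)
        have zero: "G ys = 0" if "ys \<in> lists_of (Mbasis BA n) d - map iota ` lists_of (BA \<times> {1..n}) d" for ys
        proof (cases "\<forall>w\<in>set ys. snd (snd w) = 1")
          case True
          hence "ys = map iota (map proj ys)" by (metis map_iota_proj)
          moreover have "map proj ys \<in> lists_of (BA \<times> {1..n}) d"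
            using that by (auto simp: lists_of_def Mbasis_def proj_def)
          ultimately show ?thesis using that by blast
        qed (auto simp: G_def fmap_def)
        have "(\<Sum>ys\<in>lists_of (Mbasis BA n) d. G ys) = (\<Sum>ys\<in>map iota ` lists_of (BA \<times> {1..n}) d. G ys)"
          by (rule sum.mono_neutral_right[OF finite_lists_of[OF Mbasis_finite[OF fin]] sub]) (use zero in blast)
        also have "\<dots> = (\<Sum>vs\<in>lists_of (BA \<times> {1..n}) d. G (map iota vs))"
          by (simp add: sum.reindex[OF inj_map_iota] o_def)
        also have "\<dots> = (\<Sum>vs\<in>lists_of (BA \<times> {1..n}) d.
          t xs * x vs * ksign (oddM B1) (oddC B1) xs vs *
          (\<Prod>k<d. case (xs ! k, vs ! k, map proj ws ! k) of ((a, r, s), (b, t), (c, r')) \<Rightarrow>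
            if s = t \<and> r' = r then m a b c else 0))"
        proof (rule sum.cong[OF refl])
          fix vs assume vs: "vs \<in> lists_of (BA \<times> {1..n}) d"
          have lv: "length vs = d" "length xs = d" using vs xs by (auto simp: lists_of_def)
          have pr: "(\<Prod>k<d. case (xs ! k, map iota vs ! k, ws ! k) of ((a, r, s), (a', r', s'), (c, r'', s'')) \<Rightarrow>
            if s = r' \<and> r'' = r \<and> s'' = s' then m a a' c else 0) =
            (\<Prod>k<d. case (xs ! k, vs ! k, map proj ws ! k) of ((a, r, s), (b, t), (c, r')) \<Rightarrow>
            if s = t \<and> r' = r then m a b c else 0)"
          proof (rule prod.cong[OF refl])
            fix k assume "k \<in> {..<d}"
            hence k: "k < d" by simp
            obtain a r s where xk: "xs ! k = (a, r, s)" by (cases "xs ! k") auto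
            obtain b tt where vk: "vs ! k = (b, tt)" by (cases "vs ! k") auto
            obtain c r'' s'' where wk: "ws ! k = (c, r'', s'')" by (cases "ws ! k") auto
            have "ws ! k \<in> set ws" using k len by simp
            hence "s'' = 1" using all1 wk by force
            thus "(case (xs ! k, map iota vs ! k, ws ! k) of ((a, r, s), (a', r', s'), (c, r'', s'')) \<Rightarrow>
              if s = r' \<and> r'' = r \<and> s'' = s' then m a a' c else 0) =
              (case (xs ! k, vs ! k, map proj ws ! k) of ((a, r, s), (b, t), (c, r')) \<Rightarrow>
              if s = t \<and> r' = r then m a b c else 0)"
              using k lv len xk vk wk by (simp add: iota_def proj_def)
          qed
          show "G (map iota vs) = t xs * x vs * ksign (oddM B1) (oddC B1) xs vs *
            (\<Prod>k<d. case (xs ! k, vs ! k, map proj ws ! k) of ((a, r, s), (b, t), (c, r')) \<Rightarrow>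
            if s = t \<and> r' = r then m a b c else 0)"
            unfolding G_def pr using lv by (simp add: fmap_def ksign_iota)
        qed
        finally show "(\<Sum>vs\<in>lists_of (BA \<times> {1..n}) d.
          t xs * x vs * ksign (oddM B1) (oddC B1) xs vs *
          (\<Prod>k<d. case (xs ! k, vs ! k, map proj ws ! k) of ((a, r, s), (b, t), (c, r')) \<Rightarrow>
            if s = t \<and> r' = r then m a b c else 0)) = (\<Sum>ys\<in>lists_of (Mbasis BA n) d. G ys)" by simp
      qed
      also have "\<dots> = Mtensor_mul BA B1 m n d t (fmap x) ws"
        using len by (simp add: Mtensor_mul_def)
      finally show ?thesis .
    next
      case False
      then obtain k0 where k0: "k0 < d" "snd (snd (ws ! k0)) \<noteq> 1"
        using len by (auto simp: in_set_conv_nth)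
      have "Mtensor_mul BA B1 m n d t (fmap x) ws = (\<Sum>xs\<in>lists_of (Mbasis BA n) d. \<Sum>ys\<in>lists_of (Mbasis BA n) d.
        t xs * fmap x ys * ksign (oddM B1) (oddM B1) xs ys *
        (\<Prod>k<d. case (xs ! k, ys ! k, ws ! k) of ((a, r, s), (a', r', s'), (c, r'', s'')) \<Rightarrow>
            if s = r' \<and> r'' = r \<and> s'' = s' then m a a' c else 0))"
        using len by (simp add: Mtensor_mul_def)
      also have "\<dots> = 0"
      proof (intro sum.neutral ballI)
        fix xs ys assume ys: "ys \<in> lists_of (Mbasis BA n) d"
        show "t xs * fmap x ys * ksign (oddM B1) (oddM B1) xs ys *
          (\<Prod>k<d. case (xs ! k, ys ! k, ws ! k) of ((a, r, s), (a', r', s'), (c, r'', s'')) \<Rightarrow>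
            if s = r' \<and> r'' = r \<and> s'' = s' then m a a' c else 0) = 0"
        proof (cases "\<forall>w\<in>set ys. snd (snd w) = 1")
          case True
          have "ys ! k0 \<in> set ys" using ys k0 by (auto simp: lists_of_def)
          hence "snd (snd (ys ! k0)) = 1" using True by blast
          hence "(case (xs ! k0, ys ! k0, ws ! k0) of ((a, r, s), (a', r', s'), (c, r'', s'')) \<Rightarrow>
            if s = r' \<and> r'' = r \<and> s'' = s' then m a a' c else 0) = 0"
            using k0 by (auto split: prod.splits)
          hence "(\<Prod>k<d. case (xs ! k, ys ! k, ws ! k) of ((a, r, s), (a', r', s'), (c, r'', s'')) \<Rightarrow>
            if s = r' \<and> r'' = r \<and> s'' = s' then m a a' c else 0) = 0"
            using k0 by (intro prod_zero) auto
          thus ?thesis by simp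
        qed (auto simp: fmap_def)
      qed
      finally have M0: "Mtensor_mul BA B1 m n d t (fmap x) ws = 0" .
      have "fmap (col_act BA B1 m n d t x) ws = 0" unfolding fmap_def using False by (rule if_not_P)
      thus ?thesis using M0 by simp
    qed
  qed
qed


lemma amul_bvec:
  assumes "finite BA" "a \<in> BA"
  shows "amul BA m (bvec a) e c = (\<Sum>b\<in>BA. e b * m a b c)"
proof -
  have "amul BA m (bvec a) e c = (\<Sum>a0\<in>BA. if a0 = a then (\<Sum>b\<in>BA. e b * m a0 b c) else 0)"
    unfolding amul_def bvec_def by (rule sum.cong[OF refl]) auto
  also have "\<dots> = (\<Sum>b\<in>BA. e b * m a b c)" using assms by (simp add: sum.delta)
  finally show ?thesis .
qed

lemma mem_Z: "w \<in> iota ` ColE_basis BA m e n \<longleftrightarrow>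
  snd (snd w) = 1 \<and> fst w \<in> BA \<and> amul BA m (bvec (fst w)) e = bvec (fst w) \<and> fst (snd w) \<in> {1..n}"
proof
  assume "w \<in> iota ` ColE_basis BA m e n"
  thus "snd (snd w) = 1 \<and> fst w \<in> BA \<and> amul BA m (bvec (fst w)) e = bvec (fst w) \<and> fst (snd w) \<in> {1..n}"
    by (auto simp: ColE_basis_def iota_def)
next
  assume h: "snd (snd w) = 1 \<and> fst w \<in> BA \<and> amul BA m (bvec (fst w)) e = bvec (fst w) \<and> fst (snd w) \<in> {1..n}"
  hence "w = iota (proj w)" by (simp add: iota_proj)
  moreover have "proj w \<in> ColE_basis BA m e n" using h by (auto simp: ColE_basis_def proj_def)
  ultimately show "w \<in> iota ` ColE_basis BA m e n" by blast
qed

lemma oddM_fst: "oddM B1 y = (fst y \<in> B1)" by (cases y) (simp add: oddM_def)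

lemma bvec_ne0: "bvec a \<noteq> (\<lambda>_. 0 :: 'r::zero_neq_one)"
  by (auto simp: bvec_def fun_eq_iff)

lemma factor:
  fixes m :: "'b \<Rightarrow> 'b \<Rightarrow> 'b \<Rightarrow> 'r::comm_ring_1"
  assumes fin: "finite BA" and n: "1 \<le> n"
    and hyp: "\<forall>b\<in>BA. amul BA m (bvec b) e = bvec b \<or> amul BA m (bvec b) e = (\<lambda>_. 0)"
    and xk: "xk \<in> Mbasis BA n"
  shows "(\<Sum>y\<in>Mbasis BA n. (case y of (b, r, s) \<Rightarrow> if r = 1 \<and> s = 1 then e b else 0) *
     (case (xk, y, wk) of ((a, r, s), (a', r', s'), (c, r'', s'')) \<Rightarrow> if s = r' \<and> r'' = r \<and> s'' = s' then m a a' c else 0))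
   = (if xk = wk \<and> wk \<in> iota ` ColE_basis BA m e n then 1 else 0)"
proof -
  obtain a r s where xkd: "xk = (a, r, s)" by (cases xk) auto
  obtain c r'' s'' where wkd: "wk = (c, r'', s'')" by (cases wk) auto
  have a: "a \<in> BA" "r \<in> {1..n}" using xk xkd by (auto simp: Mbasis_def)
  define F where "F y = (case y of (b, r, s) \<Rightarrow> if r = 1 \<and> s = 1 then e b else 0) *
     (case (xk, y, wk) of ((a, r, s), (a', r', s'), (c, r'', s'')) \<Rightarrow> if s = r' \<and> r'' = r \<and> s'' = s' then m a a' c else 0)" for y
  have sub: "(\<lambda>a'. (a', 1::nat, 1::nat)) ` BA \<subseteq> Mbasis BA n" using n by (auto simp: Mbasis_def)
  have zero: "F y = 0" if "y \<in> Mbasis BA n - (\<lambda>a'. (a', 1::nat, 1::nat)) ` BA" for y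
    using that by (auto simp: F_def Mbasis_def)
  have "(\<Sum>y\<in>Mbasis BA n. F y) = (\<Sum>y\<in>(\<lambda>a'. (a', 1::nat, 1::nat)) ` BA. F y)"
    by (rule sum.mono_neutral_right[OF Mbasis_finite[OF fin] sub]) (use zero in blast)
  also have "\<dots> = (\<Sum>a'\<in>BA. F (a', 1, 1))"
    by (subst sum.reindex) (auto simp: inj_on_def)
  also have "\<dots> = (\<Sum>a'\<in>BA. if s = 1 \<and> r'' = r \<and> s'' = 1 then e a' * m a a' c else 0)"
    by (rule sum.cong[OF refl]) (auto simp: F_def xkd wkd)
  also have "\<dots> = (if s = 1 \<and> r'' = r \<and> s'' = 1 then amul BA m (bvec a) e c else 0)"
  proof (cases "s = 1 \<and> r'' = r \<and> s'' = 1")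
    case True thus ?thesis using fin a by (simp add: amul_bvec)
  next
    case False
    have "\<And>a'. (if s = 1 \<and> r'' = r \<and> s'' = 1 then e a' * m a a' c else 0) = 0" using False by (rule if_not_P)
    thus ?thesis by (simp only: if_not_P[OF False] sum.neutral_const)
  qed
  also have "\<dots> = (if xk = wk \<and> wk \<in> iota ` ColE_basis BA m e n then 1 else 0)"
  proof (cases "amul BA m (bvec a) e = bvec a")
    case True
    thus ?thesis using a by (auto simp: mem_Z xkd wkd bvec_def)
  next
    case False
    hence z: "amul BA m (bvec a) e = (\<lambda>_. 0)" using hyp a by blast
    thus ?thesis using False a by (auto simp: mem_Z xkd wkd)
  qed
  finally show ?thesis unfolding F_def .
qed

lemma prod_ind: "(\<Prod>k<(d::nat). if P k then (1::'r::comm_semiring_1) else 0) = (if \<forall>k<d. P k then 1 else 0)"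
proof (cases "\<forall>k<d. P k")
  case False
  then obtain k where "k < d" "\<not> P k" by auto
  hence "(\<Prod>k<d. if P k then (1::'r) else 0) = 0" by (intro prod_zero) auto
  thus ?thesis using False by simp
qed simp

lemma eta_mul:
  fixes m :: "'b \<Rightarrow> 'b \<Rightarrow> 'b \<Rightarrow> 'r::comm_ring_1"
  assumes fin: "finite BA" and n: "1 \<le> n"
    and esup: "\<forall>c. c \<notin> Ba \<longrightarrow> e c = 0" and disj: "Ba \<inter> B1 = {}"
    and hyp: "\<forall>b\<in>BA. amul BA m (bvec b) e = bvec b \<or> amul BA m (bvec b) e = (\<lambda>_. 0)"
  shows "Mtensor_mul BA B1 m n d t (eta_e e d)
     = (\<lambda>ws. if length ws = d \<and> set ws \<subseteq> iota ` ColE_basis BA m e n then t ws else 0)"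
proof (rule ext)
  fix ws
  let ?Z = "iota ` ColE_basis BA m e n"
  let ?M = "Mbasis BA n"
  define ef where "ef y = (case y of (b, r, s) \<Rightarrow> if r = 1 \<and> s = 1 then e b else 0)" for y :: "'b \<times> nat \<times> nat"
  define g where "g xk y wk = (case (xk, y, wk) of ((a, r, s), (a', r', s'), (c, r'', s'')) \<Rightarrow>
      if s = r' \<and> r'' = r \<and> s'' = s' then m a a' c else (0::'r))" for xk y wk :: "'b \<times> nat \<times> nat"
  have ZM: "?Z \<subseteq> ?M" using n by (auto simp: ColE_basis_def iota_def Mbasis_def)
  show "Mtensor_mul BA B1 m n d t (eta_e e d) ws = (if length ws = d \<and> set ws \<subseteq> ?Z then t ws else 0)"
  proof (cases "length ws = d")
    case False thus ?thesis by (simp add: Mtensor_mul_def)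
  next
    case len: True
    have inner: "(\<Sum>ys\<in>lists_of ?M d. t xs * eta_e e d ys * ksign (oddM B1) (oddM B1) xs ys *
         (\<Prod>k<d. g (xs!k) (ys!k) (ws!k))) = t xs * (if xs = ws \<and> set ws \<subseteq> ?Z then 1 else 0)"
      if xs: "xs \<in> lists_of ?M d" for xs
    proof -
      have lx: "length xs = d" using xs by (simp add: lists_of_def)
      have "(\<Sum>ys\<in>lists_of ?M d. t xs * eta_e e d ys * ksign (oddM B1) (oddM B1) xs ys *
         (\<Prod>k<d. g (xs!k) (ys!k) (ws!k))) = (\<Sum>ys\<in>lists_of ?M d. t xs * (\<Prod>k<d. ef (ys!k) * g (xs!k) (ys!k) (ws!k)))"
      proof (rule sum.cong[OF refl])
        fix ys assume ys: "ys \<in> lists_of ?M d"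
        have ly: "length ys = d" using ys by (simp add: lists_of_def)
        have eta: "eta_e e d ys = (\<Prod>k<d. ef (ys!k))" using ly by (simp add: eta_e_def ef_def)
        show "t xs * eta_e e d ys * ksign (oddM B1) (oddM B1) xs ys * (\<Prod>k<d. g (xs!k) (ys!k) (ws!k))
            = t xs * (\<Prod>k<d. ef (ys!k) * g (xs!k) (ys!k) (ws!k))"
        proof (cases "\<forall>k<d. ef (ys!k) \<noteq> 0")
          case False
          then obtain k where k: "k < d" "ef (ys!k) = 0" by auto
          have "eta_e e d ys = 0" unfolding eta using k by (intro prod_zero) auto
          moreover have "(\<Prod>k<d. ef (ys!k) * g (xs!k) (ys!k) (ws!k)) = 0"
            using k by (intro prod_zero) (auto intro!: bexI[of _ k])
          ultimately show ?thesis by simp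
        next
          case True
          have nb: "fst (ys!k) \<notin> B1" if "k < d" for k
          proof -
            from True that have "ef (ys!k) \<noteq> 0" by blast
            hence "e (fst (ys!k)) \<noteq> 0" by (cases "ys!k") (auto simp: ef_def split: if_splits)
            hence "fst (ys!k) \<in> Ba" using esup by blast
            thus ?thesis using disj by blast
          qed
          have "ksign (oddM B1) (oddM B1) xs ys = (1::'r)"
          proof -
            have "{(l, k). l < k \<and> k < length xs \<and> oddM B1 (xs ! k) \<and> oddM B1 (ys ! l)} = {}"
              using nb lx by (auto simp: oddM_fst)
            thus ?thesis unfolding ksign_def by (simp only: card.empty power_0)
          qed
          thus ?thesis by (simp add: eta prod.distrib mult.assoc)
        qed
      qed
      also have "\<dots> = t xs * (\<Prod>k<d. \<Sum>y\<in>?M. ef y * g (xs!k) y (ws!k))"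
        using sum_lists_prod[OF Mbasis_finite[OF fin], where h="\<lambda>k y. ef y * g (xs!k) y (ws!k)" and d=d] by (simp add: sum_distrib_left[symmetric])
      also have "(\<Prod>k<d. \<Sum>y\<in>?M. ef y * g (xs!k) y (ws!k)) = (\<Prod>k<d. if xs!k = ws!k \<and> ws!k \<in> ?Z then 1 else 0)"
      proof (rule prod.cong[OF refl])
        fix k assume "k \<in> {..<d}"
        hence "xs ! k \<in> ?M" using xs by (auto simp: lists_of_def)
        thus "(\<Sum>y\<in>?M. ef y * g (xs!k) y (ws!k)) = (if xs!k = ws!k \<and> ws!k \<in> ?Z then 1 else 0)"
          unfolding ef_def g_def by (rule factor[OF fin n hyp])
      qed
      also have "\<dots> = (if xs = ws \<and> set ws \<subseteq> ?Z then 1 else 0)"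
      proof -
        have "(\<forall>k<d. xs!k = ws!k \<and> ws!k \<in> ?Z) \<longleftrightarrow> (xs = ws \<and> set ws \<subseteq> ?Z)"
          using lx len by (auto simp: list_eq_iff_nth_eq set_conv_nth)
        thus ?thesis by (simp add: prod_ind)
      qed
      finally show ?thesis .
    qed
    have "Mtensor_mul BA B1 m n d t (eta_e e d) ws = (\<Sum>xs\<in>lists_of ?M d. \<Sum>ys\<in>lists_of ?M d.
        t xs * eta_e e d ys * ksign (oddM B1) (oddM B1) xs ys * (\<Prod>k<d. g (xs!k) (ys!k) (ws!k)))"
      using len by (simp add: Mtensor_mul_def g_def)
    also have "\<dots> = (\<Sum>xs\<in>lists_of ?M d. t xs * (if xs = ws \<and> set ws \<subseteq> ?Z then 1 else 0))"
      by (rule sum.cong[OF refl]) (rule inner)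
    also have "\<dots> = (if set ws \<subseteq> ?Z then t ws else 0)"
    proof (cases "set ws \<subseteq> ?Z")
      case True
      hence "ws \<in> lists_of ?M d" using ZM len by (auto simp: lists_of_def)
      have "(\<Sum>xs\<in>lists_of ?M d. t xs * (if xs = ws \<and> set ws \<subseteq> ?Z then 1 else 0))
          = (\<Sum>xs\<in>lists_of ?M d. if xs = ws then t xs else 0)"
        using True by (intro sum.cong) auto
      thus ?thesis using True \<open>ws \<in> lists_of ?M d\<close> finite_lists_of[OF Mbasis_finite[OF fin]] by (simp add: sum.delta')
    qed simp
    finally show ?thesis using len by simp
  qed
qed


lemma adm_iota:
  assumes a: "admissible (oddC B1) X d bs" and XS: "X \<subseteq> BA \<times> {1..n}" and n: "1 \<le> n"
  shows "admissible (oddM B1) (Mbasis BA n) d (map iota bs)"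
proof -
  have "set (map iota bs) \<subseteq> Mbasis BA n"
  proof
    fix w assume "w \<in> set (map iota bs)"
    then obtain v where v: "v \<in> set bs" "w = iota v" by auto
    hence "v \<in> BA \<times> {1..n}" using a XS by (auto simp: admissible_def lists_of_def)
    thus "w \<in> Mbasis BA n" using v n by (cases v) (auto simp: Mbasis_def iota_def)
  qed
  moreover have "length (map iota bs) = d" using a by (simp add: admissible_def lists_of_def)
  moreover have "\<forall>k<d. \<forall>l<d. k \<noteq> l \<and> oddM B1 (map iota bs ! k) \<longrightarrow> map iota bs ! k \<noteq> map iota bs ! l"
    using a by (auto simp: admissible_def lists_of_def)
  ultimately show ?thesis by (simp add: admissible_def lists_of_def)
qed

lemma adm_proj:
  assumes a: "admissible (oddM B1) M d (map iota bs)" and s: "set bs \<subseteq> X"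
  shows "admissible (oddC B1) X d bs"
proof -
  have l: "length bs = d" using a by (simp add: admissible_def lists_of_def)
  have "\<forall>k<d. \<forall>l<d. k \<noteq> l \<and> oddC B1 (bs ! k) \<longrightarrow> bs ! k \<noteq> bs ! l"
  proof (intro allI impI)
    fix k l assume "k < d" "l < d" "k \<noteq> l \<and> oddC B1 (bs ! k)"
    hence "map iota bs ! k \<noteq> map iota bs ! l" using a l by (auto simp: admissible_def)
    thus "bs ! k \<noteq> bs ! l" using \<open>k < d\<close> \<open>l < d\<close> l by auto
  qed
  thus ?thesis using s l by (simp add: admissible_def lists_of_def)
qed

lemma oddC_proj[simp]: "oddC B1 (proj w) = oddM B1 w"
  by (cases w) (simp add: oddM_def oddC_def proj_def)

lemma restrict_eq:
  fixes c :: "('b::linorder \<times> nat \<times> nat) list \<Rightarrow> 'r::comm_ring_1"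
  assumes fin: "finite BA" and n: "1 \<le> n" and XS: "X \<subseteq> BA \<times> {1..n}"
  shows "(\<lambda>ws. if length ws = d \<and> set ws \<subseteq> iota ` X then
      (\<Sum>bs\<in>{bs. admissible (oddM B1) (Mbasis BA n) d bs}. c bs * yvec (oddM B1) (\<lambda>(a,_,_). a \<in> Bc) bs ws) else 0)
    = fmap (\<lambda>w. \<Sum>bs\<in>{bs. admissible (oddC B1) X d bs}. c (map iota bs) * yvec (oddC B1) (\<lambda>(a,_). a \<in> Bc) bs w)"
proof (rule ext)
  fix ws
  let ?AM = "{bs. admissible (oddM B1) (Mbasis BA n) d bs}"
  let ?AX = "{bs. admissible (oddC B1) X d bs}"
  let ?V = "\<lambda>w. \<Sum>bs\<in>?AX. c (map iota bs) * yvec (oddC B1) (\<lambda>(a,_). a \<in> Bc) bs w"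
  show "(if length ws = d \<and> set ws \<subseteq> iota ` X then
      (\<Sum>bs\<in>?AM. c bs * yvec (oddM B1) (\<lambda>(a,_,_). a \<in> Bc) bs ws) else 0) = fmap ?V ws"
  proof (cases "length ws = d \<and> set ws \<subseteq> iota ` X")
    case True
    have all1: "\<forall>w\<in>set ws. snd (snd w) = 1" using True by auto
    have wsi: "ws = map iota (map proj ws)" by (metis map_iota_proj all1)
    have finAM: "finite ?AM"
      by (rule finite_subset[OF _ finite_lists_of[OF Mbasis_finite[OF fin]]]) (auto simp: admissible_def)
    have sub: "map iota ` ?AX \<subseteq> ?AM" using adm_iota[OF _ XS n] by blast
    have zero: "c bs * yvec (oddM B1) (\<lambda>(a,_,_). a \<in> Bc) bs ws = 0" if bs: "bs \<in> ?AM - map iota ` ?AX" for bs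
    proof (rule ccontr)
      assume "c bs * yvec (oddM B1) (\<lambda>(a,_,_). a \<in> Bc) bs ws \<noteq> 0"
      hence "mset ws = mset bs" by (auto simp: yvec_def split: if_splits)
      hence "set bs = set ws" by (metis set_mset_mset)
      hence sbs: "set bs \<subseteq> iota ` X" using True by simp
      hence "\<forall>w\<in>set bs. snd (snd w) = 1" by auto
      hence bsi: "bs = map iota (map proj bs)" by (metis map_iota_proj)
      have "set (map proj bs) \<subseteq> X" using sbs by auto
      hence "map proj bs \<in> ?AX" using bs bsi adm_proj[of B1 "Mbasis BA n" d "map proj bs" X] by simp
      thus False using bs bsi by blast
    qed
    have "(\<Sum>bs\<in>?AM. c bs * yvec (oddM B1) (\<lambda>(a,_,_). a \<in> Bc) bs ws)
        = (\<Sum>bs\<in>map iota ` ?AX. c bs * yvec (oddM B1) (\<lambda>(a,_,_). a \<in> Bc) bs ws)"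
      by (rule sum.mono_neutral_right[OF finAM sub]) (use zero in blast)
    also have "\<dots> = (\<Sum>bs\<in>?AX. c (map iota bs) * yvec (oddM B1) (\<lambda>(a,_,_). a \<in> Bc) (map iota bs) (map iota (map proj ws)))"
      by (subst wsi, simp add: sum.reindex[OF inj_map_iota])
    also have "\<dots> = ?V (map proj ws)" by (simp only: yvec_iota)
    also have "\<dots> = fmap ?V ws" using all1 by (simp add: fmap_def)
    finally show ?thesis using True by simp
  next
    case False
    have "fmap ?V ws = 0"
    proof (cases "\<forall>w\<in>set ws. snd (snd w) = 1")
      case all1: True
      have wsi: "ws = map iota (map proj ws)" by (metis map_iota_proj all1)
      have "?V (map proj ws) = 0"
      proof (rule ccontr)
        assume "?V (map proj ws) \<noteq> 0"
        from gamma_supp[OF this] have "set (map proj ws) \<subseteq> X" "length (map proj ws) = d" by auto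
        hence "length ws = d \<and> set ws \<subseteq> iota ` X" using wsi by (metis image_mono length_map set_map)
        thus False using False by blast
      qed
      thus ?thesis using all1 by (simp add: fmap_def)
    next
      case False thus ?thesis unfolding fmap_def by (rule if_not_P)
    qed
    moreover have "(if length ws = d \<and> set ws \<subseteq> iota ` X then
      (\<Sum>bs\<in>?AM. c bs * yvec (oddM B1) (\<lambda>(a,_,_). a \<in> Bc) bs ws) else 0) = 0"
      using False by (rule if_not_P)
    ultimately show ?thesis by simp
  qed
qed


lemma length_filter_proj: "length (filter (oddC B1) (map proj w)) = length (filter (oddM B1) w)"
  by (induct w) auto

theorem lemma4p12:
  fixes Ba Bc B1 :: "'b::linorder set"
    and m :: "'b \<Rightarrow> 'b \<Rightarrow> 'b \<Rightarrow> 'r::{idom, ring_char_0}"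
    and one e :: "'b \<Rightarrow> 'r"
    and n d :: nat
  assumes "principal_ideal_ring TYPE('r)"
    and "calibrated_superalgebra Ba Bc B1 m one"
    and "n \<ge> 1"
    and "\<forall>c. c \<notin> Ba \<longrightarrow> e c = 0"
    and "amul (Ba \<union> Bc \<union> B1) m e e = e"
    and "\<forall>b\<in>Ba \<union> Bc \<union> B1. amul (Ba \<union> Bc \<union> B1) m (bvec b) e = bvec b
                          \<or> amul (Ba \<union> Bc \<union> B1) m (bvec b) e = (\<lambda>_. 0)"
  shows "\<exists>f. even_iso_Tmod (oddM B1) (oddC B1) (TA Ba Bc B1 n d)
              (col_act (Ba \<union> Bc \<union> B1) B1 m n d) (Mtensor_mul (Ba \<union> Bc \<union> B1) B1 m n d)
              (GammaColE Ba Bc B1 m e n d)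
              {Mtensor_mul (Ba \<union> Bc \<union> B1) B1 m n d t (eta_e e d) | t. t \<in> TA Ba Bc B1 n d}
              f"
proof -
  let ?BA = "Ba \<union> Bc \<union> B1"
  have fin: "finite ?BA" and disj: "Ba \<inter> B1 = {}"
    using assms(2) by (auto simp: calibrated_superalgebra_def)
  have n: "1 \<le> n" using assms(3) .
  let ?X = "ColE_basis ?BA m e n"
  have XS: "?X \<subseteq> ?BA \<times> {1..n}" by (auto simp: ColE_basis_def)
  note eta = eta_mul[OF fin n assms(4) disj assms(6)]
  let ?AM = "{bs. admissible (oddM B1) (Mbasis ?BA n) d bs}"
  let ?AX = "{bs. admissible (oddC B1) ?X d bs}"
  let ?iM = "\<lambda>(a::'b, _::nat, _::nat). a \<in> Bc"
  let ?iC = "\<lambda>(a::'b, _::nat). a \<in> Bc"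
  let ?V = "GammaColE Ba Bc B1 m e n d"
  let ?T = "TA Ba Bc B1 n d"
  let ?W = "{Mtensor_mul ?BA B1 m n d t (eta_e e d) | t. t \<in> ?T}"
  have Vd: "?V = {(\<lambda>w. \<Sum>bs\<in>?AX. c bs * yvec (oddC B1) ?iC bs w) | c. True}"
    by (simp add: GammaColE_def Gamma_tilde_def)
  have Td: "?T = {(\<lambda>w. \<Sum>bs\<in>?AM. c bs * yvec (oddM B1) ?iM bs w) | c. True}"
    by (simp add: TA_def Gamma_tilde_def)
  note R = restrict_eq[OF fin n XS]
  have img: "fmap ` ?V = ?W"
  proof
    show "fmap ` ?V \<subseteq> ?W"
    proof
      fix y assume "y \<in> fmap ` ?V"
      then obtain c where y: "y = fmap (\<lambda>w. \<Sum>bs\<in>?AX. c bs * yvec (oddC B1) ?iC bs w)"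
        unfolding Vd by blast
      define c' where "c' bs = c (map proj bs)" for bs :: "('b \<times> nat \<times> nat) list"
      let ?t = "\<lambda>w. \<Sum>bs\<in>?AM. c' bs * yvec (oddM B1) ?iM bs w"
      have "y = fmap (\<lambda>w. \<Sum>bs\<in>?AX. c' (map iota bs) * yvec (oddC B1) ?iC bs w)"
        unfolding y c'_def by simp
      also have "\<dots> = Mtensor_mul ?BA B1 m n d ?t (eta_e e d)"
        unfolding eta R[where c=c', symmetric] by simp
      finally have "y = Mtensor_mul ?BA B1 m n d ?t (eta_e e d)" .
      moreover have "?t \<in> ?T" unfolding Td by blast
      ultimately show "y \<in> ?W" by blast
    qed
  next
    show "?W \<subseteq> fmap ` ?V"
    proof
      fix y assume "y \<in> ?W"
      then obtain c where y: "y = Mtensor_mul ?BA B1 m n d (\<lambda>w. \<Sum>bs\<in>?AM. c bs * yvec (oddM B1) ?iM bs w) (eta_e e d)"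
        unfolding Td by blast
      have "y = fmap (\<lambda>w. \<Sum>bs\<in>?AX. c (map iota bs) * yvec (oddC B1) ?iC bs w)"
        unfolding y eta R[where c=c, symmetric] by simp
      moreover have "(\<lambda>w. \<Sum>bs\<in>?AX. c (map iota bs) * yvec (oddC B1) ?iC bs w) \<in> ?V"
        unfolding Vd by (rule CollectI, rule exI[of _ "\<lambda>bs. c (map iota bs)"]) simp
      ultimately show "y \<in> fmap ` ?V" by blast
    qed
  qed
  have supp: "x w = 0" if xV: "x \<in> ?V" and nw: "\<not> (set w \<subseteq> ?X \<and> length w = d)" for x w
  proof -
    obtain c where x: "x = (\<lambda>w. \<Sum>bs\<in>?AX. c bs * yvec (oddC B1) ?iC bs w)" using xV unfolding Vd by blast
    show ?thesis unfolding x using gamma_supp nw by blast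
  qed
  have inj: "inj_on fmap ?V"
  proof (rule inj_onI)
    fix x y assume x: "x \<in> ?V" and y: "y \<in> ?V" and eq: "fmap x = fmap y"
    show "x = y"
    proof (rule ext)
      fix w
      show "x w = y w"
      proof (cases "set w \<subseteq> ?X \<and> length w = d")
        case True
        have "fmap x (map iota w) = x w" "fmap y (map iota w) = y w" by (simp_all add: fmap_def)
        thus ?thesis using eq by metis
      next
        case False thus ?thesis using supp x y by metis
      qed
    qed
  qed
  show ?thesis
  proof (intro exI[of _ fmap], unfold even_iso_Tmod_def, intro conjI)
    show "bij_betw fmap ?V ?W" unfolding bij_betw_def using inj img by blast
    show "\<forall>x\<in>?V. \<forall>y\<in>?V. fmap (\<lambda>w. x w + y w) = (\<lambda>w. fmap x w + fmap y w)"
      by (auto simp: fmap_def fun_eq_iff)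
    show "\<forall>c. \<forall>x\<in>?V. fmap (\<lambda>w. c * x w) = (\<lambda>w. c * fmap x w)"
      by (auto simp: fmap_def fun_eq_iff)
    show "\<forall>t\<in>?T. \<forall>x\<in>?V. fmap (col_act ?BA B1 m n d t x) = Mtensor_mul ?BA B1 m n d t (fmap x)"
      using fmap_act[OF fin n] by blast
    show "\<forall>p. \<forall>x\<in>?V. homog (oddC B1) p x \<longrightarrow> homog (oddM B1) p (fmap x)"
    proof (intro allI ballI impI)
      fix p x assume h: "homog (oddC B1) p x"
      show "homog (oddM B1) p (fmap x)"
        unfolding homog_def
      proof (intro allI impI)
        fix w assume "fmap x w \<noteq> 0"
        hence "x (map proj w) \<noteq> 0" by (auto simp: fmap_def split: if_splits)
        hence "odd (length (filter (oddC B1) (map proj w))) = p" using h by (auto simp: homog_def)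
        thus "odd (length (filter (oddM B1) w)) = p" by (simp only: length_filter_proj)
      qed
    qed
  qed
qed

end
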